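(* Let $X\in\mathbb{R}^{n\times p}$, $y\in\mathbb{R}^n$, $\lambda>0$, $\alpha>0$, $G=X^\top X+\alpha I_p$, $\tilde y=X^\top y$, and $F(\beta,d)=\big(\beta-T_\lambda(\beta+d),\ G\beta+nd-\tilde y\big)$. Consider the semismooth Newton iteration $z^{k+1}=z^k-H_k^{-1}F(z^k)$, $z^k=(\beta^k,d^k)$, where $$H_k=\begin{pmatrix} I_p-D_k & -D_k\\ G & nI_p\end{pmatrix},\qquad D_k=\operatorname{diag}\big(\mathbf 1_{\{|\beta^k_i+d^k_i|>\lambda\}}\big)_{i=1}^p .$$ Let $\hat z=(\hat\beta_{\lambda,\alpha},\hat d_{\lambda,\alpha})$ be the unique root of $F$. Then there is a neighborhood $U$ of $\hat z$ such that for every $z^0\in U$ the iterates are well defined, $z^k\to\hat z$, and $\|z^{k+1}-\hat z\|_2=o(\|z^k-\hat z\|_2)$ (local superlinear convergence). In particular $\beta^k$ converges locally superlinearly to $\hat\beta_{\lambda,\alpha}$, the unique minimizer of $J_{\lambda,\alpha}(\beta)=\frac{1}{2n}\|X\beta-y\|_2^2+\lambda\|\beta\|_1+\frac{\alpha}{2n}\|\beta\|_2^2$.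
   Context: $T_\lambda$ is the componentwise soft-threshold operator $T_\lambda(x)_i=\operatorname{sgn}(x_i)\max(|x_i|-\lambda,0)$. Equivalently, with $A_k=\{i:|\beta^k_i+d^k_i|>\lambda\}$, $B_k$ its complement, one step reads: $\beta^{k+1}_{B_k}=0$, $d^{k+1}_{A_k}=\lambda\operatorname{sgn}(\beta^k_{A_k}+d^k_{A_k})$, $\beta^{k+1}_{A_k}=G_{A_kA_k}^{-1}(\tilde y_{A_k}-nd^{k+1}_{A_k})$, $d^{k+1}_{B_k}=(\tilde y_{B_k}-G_{B_kA_k}\beta^{k+1}_{A_k})/n$. *)

theory Defs
  imports "HOL-Analysis.Analysis" "HOL-Library.Landau_Symbols"
begin

definition soft_thr :: "real \<Rightarrow> real^'p \<Rightarrow> real^'p" where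
  "soft_thr lam x = (\<chi> i. sgn (x$i) * max (\<bar>x$i\<bar> - lam) 0)"

definition gram :: "real^'p^'n \<Rightarrow> real \<Rightarrow> real^'p^'p" where
  "gram X alpha = transpose X ** X + alpha *\<^sub>R mat 1"

definition ytil :: "real^'p^'n \<Rightarrow> real^'n \<Rightarrow> real^'p" where
  "ytil X y = transpose X *v y"

definition Fmap :: "real^'p^'n \<Rightarrow> real^'n \<Rightarrow> real \<Rightarrow> real \<Rightarrow>
    (real^'p) \<times> (real^'p) \<Rightarrow> (real^'p) \<times> (real^'p)" where
  "Fmap X y lam alpha z = (fst z - soft_thr lam (fst z + snd z),
     gram X alpha *v fst z + real CARD('n) *\<^sub>R snd z - ytil X y)"

definition Dind :: "real \<Rightarrow> (real^'p) \<times> (real^'p) \<Rightarrow> 'p \<Rightarrow> real" where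
  "Dind lam z i = (if \<bar>fst z $ i + snd z $ i\<bar> > lam then 1 else 0)"

definition Hmap :: "real^'p^'n \<Rightarrow> real \<Rightarrow> real \<Rightarrow> (real^'p) \<times> (real^'p) \<Rightarrow>
    (real^'p) \<times> (real^'p) \<Rightarrow> (real^'p) \<times> (real^'p)" where
  "Hmap X lam alpha z w = ((\<chi> i. (1 - Dind lam z i) * fst w $ i - Dind lam z i * snd w $ i),
     gram X alpha *v fst w + real CARD('n) *\<^sub>R snd w)"

primrec ssn_iter :: "real^'p^'n \<Rightarrow> real^'n \<Rightarrow> real \<Rightarrow> real \<Rightarrow>
    (real^'p) \<times> (real^'p) \<Rightarrow> nat \<Rightarrow> (real^'p) \<times> (real^'p)" where
  "ssn_iter X y lam alpha z0 0 = z0"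
| "ssn_iter X y lam alpha z0 (Suc k) =
     (let z = ssn_iter X y lam alpha z0 k
      in z - inv (Hmap X lam alpha z) (Fmap X y lam alpha z))"

definition Jobj :: "real^'p^'n \<Rightarrow> real^'n \<Rightarrow> real \<Rightarrow> real \<Rightarrow> real^'p \<Rightarrow> real" where
  "Jobj X y lam alpha b = (1 / (2 * real CARD('n))) * (norm (X *v b - y))\<^sup>2
     + lam * (\<Sum>i\<in>UNIV. \<bar>b $ i\<bar>) + (alpha / (2 * real CARD('n))) * (norm b)\<^sup>2"

end

theory Submission
  imports Defs
begin

lemma gram_mv: "gram X alpha *v w = transpose X *v (X *v w) + alpha *\<^sub>R w"
  unfolding gram_def
  by (simp add: matrix_vector_mult_add_rdistrib matrix_vector_mul_assoc[symmetric]
        scaleR_matrix_vector_assoc[symmetric] matrix_vector_mul_lid)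

lemma gram_quad: "w \<bullet> (gram X alpha *v w) = (norm (X *v w))\<^sup>2 + alpha * (norm w)\<^sup>2"
  by (simp add: gram_mv inner_add_right transpose_matrix_vector dot_lmul_matrix[symmetric]
        power2_norm_eq_inner inner_commute)

lemma soft_scalar:
  fixes b d lam :: real
  assumes "lam > 0" "b = sgn (b + d) * max (\<bar>b + d\<bar> - lam) 0"
  shows "\<bar>d\<bar> \<le> lam \<and> d * b = lam * \<bar>b\<bar>
    \<and> (\<bar>b + d\<bar> \<ge> lam \<longrightarrow> d = lam * sgn (b + d))
    \<and> (\<bar>b + d\<bar> \<le> lam \<longrightarrow> b = 0)"
proof (cases "b + d > 0")
  case True
  then show ?thesis using assms by (auto simp: sgn_if abs_if max_def add_eq_0_iff split: if_splits)
next
  case False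
  then show ?thesis using assms by (cases "b + d = 0") (auto simp: sgn_if abs_if max_def add_eq_0_iff split: if_splits)
qed

lemma mv_scale: "(A::real^'a^'b) *v (c *\<^sub>R v) = c *\<^sub>R (A *v v)"
  by (simp add: vec_eq_iff matrix_vector_mult_def sum_distrib_left algebra_simps)

lemma H_linear: "linear (Hmap X lam alpha z)"
proof (rule linearI)
  fix v w
  show "Hmap X lam alpha z (v + w) = Hmap X lam alpha z v + Hmap X lam alpha z w"
    by (simp add: Hmap_def prod_eq_iff vec_eq_iff matrix_vector_right_distrib scaleR_add_right ring_distribs add_ac)
next
  fix c :: real and v
  show "Hmap X lam alpha z (c *\<^sub>R v) = c *\<^sub>R Hmap X lam alpha z v"
    by (simp add: Hmap_def prod_eq_iff vec_eq_iff mv_scale scaleR_add_right ring_distribs mult_ac)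
qed

lemma H_inj:
  assumes "alpha > 0"
  shows "inj (Hmap (X::real^'p^'n) lam alpha z)"
proof -
  have "w = 0" if hw: "Hmap X lam alpha z w = 0" for w
  proof -
    obtain w1 w2 where w: "w = (w1, w2)" by (cases w)
    have h1: "(\<chi> i. (1 - Dind lam z i) * w1 $ i - Dind lam z i * w2 $ i) = 0"
      and c2: "gram X alpha *v w1 + real CARD('n) *\<^sub>R w2 = 0"
      using hw by (simp_all add: Hmap_def w prod_eq_iff)
    have c1: "\<And>i. (1 - Dind lam z i) * w1 $ i - Dind lam z i * w2 $ i = 0"
      using h1 by (simp add: vec_eq_iff)
    have p: "w1 $ i * w2 $ i = 0" for i
      using c1[of i] by (cases "Dind lam z i = 1") (auto simp: Dind_def split: if_splits)
    have ip: "w1 \<bullet> w2 = 0" by (simp add: inner_vec_def p)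
    have "w1 \<bullet> (gram X alpha *v w1 + real CARD('n) *\<^sub>R w2) = 0" using c2 by simp
    hence "(norm (X *v w1))\<^sup>2 + alpha * (norm w1)\<^sup>2 = 0"
      by (simp add: inner_add_right gram_quad ip)
    hence "alpha * (norm w1)\<^sup>2 = 0"
      by (smt (verit) mult_nonneg_nonneg assms zero_le_power2)
    hence w10: "w1 = 0" using assms by simp
    hence "real CARD('n) *\<^sub>R w2 = 0" using c2 by simp
    hence "w2 = 0" by simp
    thus ?thesis using w w10 by (simp add: zero_prod_def)
  qed
  thus ?thesis using linear_injective_0[OF H_linear] by blast
qed

lemma H_bij:
  assumes "alpha > 0"
  shows "bij (Hmap (X::real^'p^'n) lam alpha z)"
proof -
  have i: "inj (Hmap X lam alpha z)" by (rule H_inj[OF assms])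
  have "surj (Hmap X lam alpha z)" by (rule linear_inj_imp_surj[OF H_linear i])
  thus ?thesis using i by (simp add: bij_def)
qed

lemma bij_all:
  assumes "alpha > 0"
  shows "\<forall>z0 k. bij (Hmap (X::real^'p^'n) lam alpha (ssn_iter X y lam alpha z0 k))"
  by (intro allI H_bij[OF assms])

lemma conv_gen:
  fixes X :: "real^'p^'n" and y :: "real^'n" and lam alpha :: real
    and zhat z0 :: "(real^'p) \<times> (real^'p)"
  assumes al: "alpha > 0" and it: "\<And>k. ssn_iter X y lam alpha z0 (Suc k) = zhat"
  shows "(\<forall>k. bij (Hmap X lam alpha (ssn_iter X y lam alpha z0 k)))
         \<and> ssn_iter X y lam alpha z0 \<longlonglongrightarrow> zhat
         \<and> (\<lambda>k. norm (ssn_iter X y lam alpha z0 (Suc k) - zhat))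
             \<in> o[sequentially](\<lambda>k. norm (ssn_iter X y lam alpha z0 k - zhat))
         \<and> (\<lambda>k. fst (ssn_iter X y lam alpha z0 k)) \<longlonglongrightarrow> fst zhat
         \<and> (\<lambda>k. norm (fst (ssn_iter X y lam alpha z0 (Suc k)) - fst zhat))
             \<in> o[sequentially](\<lambda>k. norm (ssn_iter X y lam alpha z0 k - zhat))"
proof -
  have l1: "ssn_iter X y lam alpha z0 \<longlonglongrightarrow> zhat"
    by (rule LIMSEQ_imp_Suc) (simp only: it tendsto_const)
  have e1: "(\<lambda>k. norm (ssn_iter X y lam alpha z0 (Suc k) - zhat)) = (\<lambda>_. 0)"
    by (simp only: it diff_self norm_zero)
  have e2: "(\<lambda>k. norm (fst (ssn_iter X y lam alpha z0 (Suc k)) - fst zhat)) = (\<lambda>_. 0)"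
    by (simp only: it diff_self norm_zero)
  have c1: "\<forall>k. bij (Hmap X lam alpha (ssn_iter X y lam alpha z0 k))"
    by (intro allI H_bij[OF al])
  have c3: "(\<lambda>k. norm (ssn_iter X y lam alpha z0 (Suc k) - zhat))
             \<in> o[sequentially](\<lambda>k. norm (ssn_iter X y lam alpha z0 k - zhat))"
    unfolding e1 by (rule zero_in_smallo)
  have c5: "(\<lambda>k. norm (fst (ssn_iter X y lam alpha z0 (Suc k)) - fst zhat))
             \<in> o[sequentially](\<lambda>k. norm (ssn_iter X y lam alpha z0 k - zhat))"
    unfolding e2 by (rule zero_in_smallo)
  show ?thesis using c1 l1 c3 tendsto_fst[OF l1] c5 by (intro conjI)
qed

lemma root_eqs:
  assumes "Fmap (X::real^'p^'n) y lam alpha z = 0"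
  shows "fst z = soft_thr lam (fst z + snd z)"
    and "gram X alpha *v fst z + real CARD('n) *\<^sub>R snd z = ytil X y"
  using assms by (simp_all add: Fmap_def prod_eq_iff)

lemma root_comp:
  assumes "Fmap (X::real^'p^'n) y lam alpha z = 0" "lam > 0"
  shows "\<bar>snd z $ i\<bar> \<le> lam \<and> snd z $ i * fst z $ i = lam * \<bar>fst z $ i\<bar>
    \<and> (\<bar>fst z $ i + snd z $ i\<bar> \<ge> lam \<longrightarrow> snd z $ i = lam * sgn (fst z $ i + snd z $ i))
    \<and> (\<bar>fst z $ i + snd z $ i\<bar> \<le> lam \<longrightarrow> fst z $ i = 0)"
proof -
  have "fst z $ i = soft_thr lam (fst z + snd z) $ i" using root_eqs(1)[OF assms(1)] by simp
  hence "fst z $ i = sgn (fst z $ i + snd z $ i) * max (\<bar>fst z $ i + snd z $ i\<bar> - lam) 0"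
    by (simp add: soft_thr_def)
  thus ?thesis using soft_scalar[OF assms(2)] by blast
qed

lemma J_ineq:
  assumes root: "Fmap (X::real^'p^'n) y lam alpha z = 0" and lam: "lam > 0" and al: "alpha > 0"
  shows "Jobj X y lam alpha b - Jobj X y lam alpha (fst z)
      \<ge> alpha / (2 * real CARD('n)) * (norm (b - fst z))\<^sup>2"
proof -
  define be where "be = fst z"
  define d where "d = snd z"
  define h where "h = b - be"
  define u where "u = X *v be - y"
  define N where "N = real CARD('n)"
  have N: "N > 0" unfolding N_def by simp
  have bh: "b = be + h" unfolding h_def by simp
  have Xb: "X *v b - y = u + X *v h" unfolding u_def bh by (simp add: matrix_vector_right_distrib)
  have A: "(norm (X *v b - y))\<^sup>2 = (norm u)\<^sup>2 + 2 * (u \<bullet> (X *v h)) + (norm (X *v h))\<^sup>2"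
    unfolding Xb by (simp add: power2_norm_eq_inner inner_add_left inner_add_right inner_commute)
  have B: "(norm b)\<^sup>2 = (norm be)\<^sup>2 + 2 * (be \<bullet> h) + (norm h)\<^sup>2"
    unfolding bh by (simp add: power2_norm_eq_inner inner_add_left inner_add_right inner_commute)
  have r2: "transpose X *v (X *v be) + alpha *\<^sub>R be + N *\<^sub>R d = transpose X *v y"
    using root_eqs(2)[OF root] by (simp add: gram_mv ytil_def be_def d_def N_def)
  have Xu: "transpose X *v u = - (N *\<^sub>R d) - alpha *\<^sub>R be"
    using r2 unfolding u_def by (simp add: matrix_vector_mult_diff_distrib algebra_simps)
  have E: "u \<bullet> (X *v h) + alpha * (be \<bullet> h) = - N * (d \<bullet> h)"
  proof -
    have "u \<bullet> (X *v h) + alpha * (be \<bullet> h) = (transpose X *v u + alpha *\<^sub>R be) \<bullet> h"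
      by (simp add: inner_add_left transpose_matrix_vector dot_lmul_matrix)
    also have "\<dots> = (- (N *\<^sub>R d)) \<bullet> h" using Xu by simp
    also have "\<dots> = - N * (d \<bullet> h)" by simp
    finally show ?thesis .
  qed
  have comp: "lam * \<bar>b $ i\<bar> \<ge> lam * \<bar>be $ i\<bar> + d $ i * h $ i" for i
  proof -
    have c: "\<bar>d $ i\<bar> \<le> lam" "d $ i * be $ i = lam * \<bar>be $ i\<bar>"
      using root_comp[OF root lam, of i] by (simp_all add: be_def d_def)
    have "d $ i * b $ i \<le> \<bar>d $ i\<bar> * \<bar>b $ i\<bar>" by (simp add: abs_mult[symmetric])
    also have "\<dots> \<le> lam * \<bar>b $ i\<bar>" using c(1) by (simp add: mult_right_mono)
    finally have "d $ i * b $ i \<le> lam * \<bar>b $ i\<bar>" .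
    moreover have "d $ i * h $ i = d $ i * b $ i - d $ i * be $ i" by (simp add: h_def right_diff_distrib)
    ultimately show ?thesis using c(2) by linarith
  qed
  have L: "lam * (\<Sum>i\<in>UNIV. \<bar>b $ i\<bar>) \<ge> lam * (\<Sum>i\<in>UNIV. \<bar>be $ i\<bar>) + d \<bullet> h"
  proof -
    have "lam * (\<Sum>i\<in>UNIV. \<bar>be $ i\<bar>) + d \<bullet> h = (\<Sum>i\<in>UNIV. lam * \<bar>be $ i\<bar> + d $ i * h $ i)"
      by (simp add: inner_vec_def sum_distrib_left sum.distrib)
    also have "\<dots> \<le> (\<Sum>i\<in>UNIV. lam * \<bar>b $ i\<bar>)" by (rule sum_mono) (use comp in auto)
    also have "\<dots> = lam * (\<Sum>i\<in>UNIV. \<bar>b $ i\<bar>)" by (simp add: sum_distrib_left)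
    finally show ?thesis .
  qed
  have Jb: "Jobj X y lam alpha b = ((norm u)\<^sup>2 + 2 * (u \<bullet> (X *v h)) + (norm (X *v h))\<^sup>2) / (2 * N)
     + lam * (\<Sum>i\<in>UNIV. \<bar>b $ i\<bar>) + alpha * ((norm be)\<^sup>2 + 2 * (be \<bullet> h) + (norm h)\<^sup>2) / (2 * N)"
    unfolding Jobj_def A B N_def by simp
  have Jbe: "Jobj X y lam alpha be = (norm u)\<^sup>2 / (2 * N)
     + lam * (\<Sum>i\<in>UNIV. \<bar>be $ i\<bar>) + alpha * (norm be)\<^sup>2 / (2 * N)"
    unfolding Jobj_def u_def N_def by simp
  have "Jobj X y lam alpha b - Jobj X y lam alpha be
      = (u \<bullet> (X *v h) + alpha * (be \<bullet> h)) / N + (norm (X *v h))\<^sup>2 / (2 * N)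
        + (lam * (\<Sum>i\<in>UNIV. \<bar>b $ i\<bar>) - lam * (\<Sum>i\<in>UNIV. \<bar>be $ i\<bar>)) + alpha * (norm h)\<^sup>2 / (2 * N)"
    unfolding Jb Jbe using N by (simp add: field_simps)
  also have "(u \<bullet> (X *v h) + alpha * (be \<bullet> h)) / N = - (d \<bullet> h)" using E N by simp
  finally have "Jobj X y lam alpha b - Jobj X y lam alpha be
      = - (d \<bullet> h) + (norm (X *v h))\<^sup>2 / (2 * N)
        + (lam * (\<Sum>i\<in>UNIV. \<bar>b $ i\<bar>) - lam * (\<Sum>i\<in>UNIV. \<bar>be $ i\<bar>)) + alpha * (norm h)\<^sup>2 / (2 * N)" .
  moreover have "(norm (X *v h))\<^sup>2 / (2 * N) \<ge> 0" using N by simp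
  moreover have "alpha * (norm h)\<^sup>2 / (2 * N) = alpha / (2 * N) * (norm h)\<^sup>2" by simp
  ultimately have "Jobj X y lam alpha b - Jobj X y lam alpha be \<ge> alpha / (2 * N) * (norm h)\<^sup>2"
    using L by linarith
  thus ?thesis unfolding N_def h_def be_def .
qed

lemma ag_aux: "(a::'a::ab_group_add) - b + (c - d) = a + c - (b + d)"
  by (simp add: algebra_simps)

lemma step_scalar:
  fixes b d bh dh lam e :: real
  assumes lam: "lam > 0" and sb: "bh = sgn (bh + dh) * max (\<bar>bh + dh\<bar> - lam) 0"
    and close: "\<bar>(b + d) - (bh + dh)\<bar> < e"
    and em: "e \<le> (if \<bar>bh + dh\<bar> = lam then lam else \<bar>\<bar>bh + dh\<bar> - lam\<bar>)"
  shows "(1 - (if \<bar>b + d\<bar> > lam then 1 else 0)) * (b - bh)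
       - (if \<bar>b + d\<bar> > lam then 1 else 0) * (d - dh)
       = b - sgn (b + d) * max (\<bar>b + d\<bar> - lam) 0"
proof -
  define s where "s = bh + dh"
  define v where "v = b + d"
  have ss: "\<bar>dh\<bar> \<le> lam" "\<bar>s\<bar> \<ge> lam \<longrightarrow> dh = lam * sgn s" "\<bar>s\<bar> \<le> lam \<longrightarrow> bh = 0"
    using soft_scalar[OF lam sb] unfolding s_def by auto
  have cl: "\<bar>v - s\<bar> < e" using close unfolding s_def v_def .
  have em': "e \<le> (if \<bar>s\<bar> = lam then lam else \<bar>\<bar>s\<bar> - lam\<bar>)" using em unfolding s_def .
  show ?thesis
  proof (cases "\<bar>v\<bar> > lam")
    case True
    have sl: "\<bar>s\<bar> \<ge> lam"
    proof (rule ccontr)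
      assume "\<not> ?thesis"
      hence "e \<le> lam - \<bar>s\<bar>" using em' by auto
      thus False using cl True by linarith
    qed
    have "e \<le> \<bar>s\<bar>" using em' sl lam by (auto split: if_splits)
    hence "sgn v = sgn s" using cl sl lam by (auto simp: sgn_if abs_if split: if_splits)
    hence "dh = lam * sgn v" using ss(2) sl by simp
    moreover have "sgn v * max (\<bar>v\<bar> - lam) 0 = v - lam * sgn v"
      using True by (auto simp: sgn_if abs_if max_def)
    ultimately show ?thesis using True unfolding v_def by (simp add: algebra_simps)
  next
    case False
    have sl: "\<bar>s\<bar> \<le> lam"
    proof (rule ccontr)
      assume "\<not> ?thesis"
      hence "e \<le> \<bar>s\<bar> - lam" using em' by auto
      thus False using cl False by linarith
    qed
    hence "bh = 0" using ss(3) by simp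
    moreover have "max (\<bar>v\<bar> - lam) 0 = 0" using False by simp
    ultimately show ?thesis using False unfolding v_def by simp
  qed
qed

theorem theorem2:
  fixes X :: "real^'p^'n" and y :: "real^'n" and lam alpha :: real
    and zhat :: "(real^'p) \<times> (real^'p)"
  assumes "lam > 0" and "alpha > 0"
    and "Fmap X y lam alpha zhat = 0"
  shows "(\<forall>z. Fmap X y lam alpha z = 0 \<longrightarrow> z = zhat)
    \<and> (\<exists>U. open U \<and> zhat \<in> U \<and>
        (\<forall>z0\<in>U.
           (\<forall>k. bij (Hmap X lam alpha (ssn_iter X y lam alpha z0 k)))
         \<and> ssn_iter X y lam alpha z0 \<longlonglongrightarrow> zhat
         \<and> (\<lambda>k. norm (ssn_iter X y lam alpha z0 (Suc k) - zhat))
             \<in> o[sequentially](\<lambda>k. norm (ssn_iter X y lam alpha z0 k - zhat))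
         \<and> (\<lambda>k. fst (ssn_iter X y lam alpha z0 k)) \<longlonglongrightarrow> fst zhat
         \<and> (\<lambda>k. norm (fst (ssn_iter X y lam alpha z0 (Suc k)) - fst zhat))
             \<in> o[sequentially](\<lambda>k. norm (ssn_iter X y lam alpha z0 k - zhat))))
    \<and> (\<forall>b. Jobj X y lam alpha (fst zhat) \<le> Jobj X y lam alpha b)
    \<and> (\<forall>b. Jobj X y lam alpha b \<le> Jobj X y lam alpha (fst zhat) \<longrightarrow> b = fst zhat)"
proof -
  define N where "N = real CARD('n)"
  have N: "N > 0" unfolding N_def by simp
  have Jin: "Jobj X y lam alpha b - Jobj X y lam alpha (fst zhat)
      \<ge> alpha / (2 * N) * (norm (b - fst zhat))\<^sup>2" for b
    using J_ineq[OF assms(3,1,2)] unfolding N_def .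
  have Jmin: "\<forall>b. Jobj X y lam alpha (fst zhat) \<le> Jobj X y lam alpha b"
  proof
    fix b
    have "alpha / (2 * N) * (norm (b - fst zhat))\<^sup>2 \<ge> 0" using assms(2) N by simp
    thus "Jobj X y lam alpha (fst zhat) \<le> Jobj X y lam alpha b" using Jin[of b] by linarith
  qed
  have Jstr: "\<forall>b. Jobj X y lam alpha b \<le> Jobj X y lam alpha (fst zhat) \<longrightarrow> b = fst zhat"
  proof (intro allI impI)
    fix b
    assume "Jobj X y lam alpha b \<le> Jobj X y lam alpha (fst zhat)"
    hence "alpha / (2 * N) * (norm (b - fst zhat))\<^sup>2 \<le> 0" using Jin[of b] by linarith
    moreover have "alpha / (2 * N) > 0" using assms(2) N by simp
    ultimately have "(norm (b - fst zhat))\<^sup>2 \<le> 0"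
      using mult_le_cancel_left_pos[of "alpha / (2 * N)" "(norm (b - fst zhat))\<^sup>2" 0] by simp
    thus "b = fst zhat" by simp
  qed
  have uniq: "\<forall>z. Fmap X y lam alpha z = 0 \<longrightarrow> z = zhat"
  proof (intro allI impI)
    fix z
    assume rz: "Fmap X y lam alpha z = 0"
    have "Jobj X y lam alpha (fst zhat) - Jobj X y lam alpha (fst z)
      \<ge> alpha / (2 * real CARD('n)) * (norm (fst zhat - fst z))\<^sup>2"
      using J_ineq[OF rz assms(1,2)] .
    moreover have "alpha / (2 * real CARD('n)) * (norm (fst zhat - fst z))\<^sup>2 \<ge> 0"
      using assms(2) by simp
    ultimately have "Jobj X y lam alpha (fst z) \<le> Jobj X y lam alpha (fst zhat)" by linarith
    hence f: "fst z = fst zhat" using Jstr by blast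
    have r1: "gram X alpha *v fst zhat + real CARD('n) *\<^sub>R snd z = ytil X y"
      using root_eqs(2)[OF rz] f by simp
    have "gram X alpha *v fst zhat + real CARD('n) *\<^sub>R snd z
        = gram X alpha *v fst zhat + real CARD('n) *\<^sub>R snd zhat"
      unfolding r1 root_eqs(2)[OF assms(3)] ..
    hence "real CARD('n) *\<^sub>R snd z = real CARD('n) *\<^sub>R snd zhat"
      by (rule add_left_imp_eq)
    hence "snd z = snd zhat" by simp
    thus "z = zhat" using f by (simp add: prod_eq_iff)
  qed
  define s where "s = fst zhat + snd zhat"
  define m where "m i = (if \<bar>s $ i\<bar> = lam then lam else \<bar>\<bar>s $ i\<bar> - lam\<bar>)" for i
  define e where "e = Min (range m)"
  have mpos: "m i > 0" for i using assms(1) unfolding m_def by auto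
  have epos: "e > 0" unfolding e_def using mpos by (simp add: Min_gr_iff)
  have em: "e \<le> m i" for i unfolding e_def by simp
  define U where "U = {z :: (real^'p) \<times> (real^'p). norm (fst z + snd z - s) < e}"
  have c1: "continuous_on UNIV (\<lambda>z::(real^'p)\<times>(real^'p). norm (fst z + snd z - s))"
    by (intro continuous_on_norm continuous_on_diff continuous_on_add continuous_on_fst
        continuous_on_snd continuous_on_id continuous_on_const)
  have c2: "continuous_on UNIV (\<lambda>z::(real^'p)\<times>(real^'p). e)"
    by (rule continuous_on_const)
  have oU: "open U" unfolding U_def by (rule open_Collect_less[OF c1 c2])
  have zU: "zhat \<in> U" unfolding U_def s_def using epos by simp
  have step: "z - inv (Hmap X lam alpha z) (Fmap X y lam alpha z) = zhat" if zU: "z \<in> U" for z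
  proof -
    have Hz: "Hmap X lam alpha z (z - zhat) = Fmap X y lam alpha z"
    proof (rule prod_eqI)
      show "fst (Hmap X lam alpha z (z - zhat)) = fst (Fmap X y lam alpha z)"
      proof (simp add: Hmap_def Fmap_def vec_eq_iff soft_thr_def, intro allI)
        fix i
        have sb: "fst zhat $ i = sgn (fst zhat $ i + snd zhat $ i) * max (\<bar>fst zhat $ i + snd zhat $ i\<bar> - lam) 0"
          using arg_cong[OF root_eqs(1)[OF assms(3)], of "\<lambda>v. v $ i"] by (simp add: soft_thr_def)
        have "\<bar>(fst z + snd z - s) $ i\<bar> \<le> norm (fst z + snd z - s)" by (rule component_le_norm_cart)
        hence cl: "\<bar>(fst z $ i + snd z $ i) - (fst zhat $ i + snd zhat $ i)\<bar> < e"
          using zU unfolding U_def s_def by simp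
        have e2: "e \<le> (if \<bar>fst zhat $ i + snd zhat $ i\<bar> = lam then lam
            else \<bar>\<bar>fst zhat $ i + snd zhat $ i\<bar> - lam\<bar>)"
          using em[of i] by (simp only: m_def s_def vector_add_component)
        show "(1 - Dind lam z i) * (fst z $ i - fst zhat $ i) - Dind lam z i * (snd z $ i - snd zhat $ i)
          = fst z $ i - sgn (fst z $ i + snd z $ i) * max (\<bar>fst z $ i + snd z $ i\<bar> - lam) 0"
          using step_scalar[OF assms(1) sb cl e2] unfolding Dind_def by simp
      qed
    next
      show "snd (Hmap X lam alpha z (z - zhat)) = snd (Fmap X y lam alpha z)"
        unfolding Hmap_def Fmap_def snd_conv fst_diff snd_diff matrix_vector_mult_diff_distrib
          scaleR_diff_right root_eqs(2)[OF assms(3), symmetric]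
        by (rule ag_aux)
    qed
    have "inv (Hmap X lam alpha z) (Fmap X y lam alpha z) = z - zhat"
      unfolding Hz[symmetric] by (rule inv_f_f[OF H_inj[OF assms(2)]])
    thus ?thesis by simp
  qed
  have iter: "ssn_iter X y lam alpha z0 (Suc k) = zhat" if "z0 \<in> U" for z0 k
  proof (induction k)
    case 0
    show ?case using step[OF that] by simp
  next
    case (Suc k)
    show ?case using step[OF zU] Suc by (simp add: Let_def)
  qed
  have conv: "\<forall>z0\<in>U.
           (\<forall>k. bij (Hmap X lam alpha (ssn_iter X y lam alpha z0 k)))
         \<and> ssn_iter X y lam alpha z0 \<longlonglongrightarrow> zhat
         \<and> (\<lambda>k. norm (ssn_iter X y lam alpha z0 (Suc k) - zhat))
             \<in> o[sequentially](\<lambda>k. norm (ssn_iter X y lam alpha z0 k - zhat))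
         \<and> (\<lambda>k. fst (ssn_iter X y lam alpha z0 k)) \<longlonglongrightarrow> fst zhat
         \<and> (\<lambda>k. norm (fst (ssn_iter X y lam alpha z0 (Suc k)) - fst zhat))
             \<in> o[sequentially](\<lambda>k. norm (ssn_iter X y lam alpha z0 k - zhat))"
    apply (rule ballI)
    apply (rule conv_gen[OF assms(2)])
    apply (erule iter)
    done
  show ?thesis
  proof (intro conjI)
    show "\<forall>z. Fmap X y lam alpha z = 0 \<longrightarrow> z = zhat" by (rule uniq)
    show "\<forall>b. Jobj X y lam alpha (fst zhat) \<le> Jobj X y lam alpha b" by (rule Jmin)
    show "\<forall>b. Jobj X y lam alpha b \<le> Jobj X y lam alpha (fst zhat) \<longrightarrow> b = fst zhat" by (rule Jstr)
    show "\<exists>U. open U \<and> zhat \<in> U \<and>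
        (\<forall>z0\<in>U.
           (\<forall>k. bij (Hmap X lam alpha (ssn_iter X y lam alpha z0 k)))
         \<and> ssn_iter X y lam alpha z0 \<longlonglongrightarrow> zhat
         \<and> (\<lambda>k. norm (ssn_iter X y lam alpha z0 (Suc k) - zhat))
             \<in> o[sequentially](\<lambda>k. norm (ssn_iter X y lam alpha z0 k - zhat))
         \<and> (\<lambda>k. fst (ssn_iter X y lam alpha z0 k)) \<longlonglongrightarrow> fst zhat
         \<and> (\<lambda>k. norm (fst (ssn_iter X y lam alpha z0 (Suc k)) - fst zhat))
             \<in> o[sequentially](\<lambda>k. norm (ssn_iter X y lam alpha z0 k - zhat)))"
      by (rule exI[of _ U], intro conjI oU zU conv)
  qed
qed

end
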